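(* $\mathrm{non}^{*}_{\omega}(\mathcal{S}pl)=\mathfrak{s}_{\omega}$.
   Context: For an infinite $A\subseteq\omega$, let $S(A)$ be the set of all $\sigma\in2^{<\omega}$ such that $\sigma$ is constant on $A\cap\mathrm{dom}(\sigma)$. The splitting ideal $\mathcal{S}pl$ is the ideal on $2^{<\omega}$ generated by the sets $S(A)$, $A\in[\omega]^{\omega}$. For an ideal $\mathcal{J}$ on a countable set $X$, $\mathrm{non}_{\omega}^*(\mathcal{J})=\min\{|\mathcal{F}|:\mathcal{F}\subseteq[X]^{\omega}$ and for every countable $\bar{A}\subseteq\mathcal{J}$ there is $F\in\mathcal{F}$ such that $A\cap F$ is finite for every $A\in\bar{A}\}$. A family $\mathcal{A}\subseteq[\omega]^{\omega}$ is $\omega$-splitting if for every countable $\{A_{n}:n\in\omega\}\subseteq[\omega]^{\omega}$ there is $A\in\mathcal{A}$ splitting every $A_{n}$ (i.e. $A_n\cap A$ and $A_n\setminus A$ are infinite). $\mathfrak{s}_{\omega}$ is the least size of an $\omega$-splitting family. *)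

theory Defs
  imports Main "HOL-Library.Countable_Set"
begin

text \<open>Finite binary sequences \<open>2^{<\<omega>}\<close> are modelled as \<open>bool list\<close>;
  \<open>dom \<sigma> = {0..<length \<sigma>}\<close>.\<close>

definition S_set :: "nat set \<Rightarrow> bool list set" where
  "S_set A = {\<sigma>. \<forall>i\<in>A. \<forall>j\<in>A. i < length \<sigma> \<longrightarrow> j < length \<sigma> \<longrightarrow> \<sigma> ! i = \<sigma> ! j}"

definition Spl :: "bool list set set" where
  "Spl = {Y. \<exists>As. finite As \<and> (\<forall>A\<in>As. infinite A) \<and> Y \<subseteq> (\<Union>A\<in>As. S_set A)}"

definition non_star_omega_family :: "'a set set \<Rightarrow> 'a set set \<Rightarrow> bool" where
  "non_star_omega_family J Fs \<longleftrightarrow>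
     (\<forall>F\<in>Fs. infinite F \<and> countable F) \<and>
     (\<forall>Bs :: 'a set set. countable Bs \<and> Bs \<subseteq> J \<longrightarrow> (\<exists>F\<in>Fs. \<forall>B\<in>Bs. finite (B \<inter> F)))"

definition non_star_omega :: "'a set set \<Rightarrow> 'a set rel" where
  "non_star_omega J = card_of (SOME Fs. non_star_omega_family J Fs \<and>
       (\<forall>Gs. non_star_omega_family J Gs \<longrightarrow> (card_of Fs, card_of Gs) \<in> ordLeq))"

definition splits :: "nat set \<Rightarrow> nat set \<Rightarrow> bool" where
  "splits A B \<longleftrightarrow> infinite (B \<inter> A) \<and> infinite (B - A)"

definition omega_splitting :: "nat set set \<Rightarrow> bool" where
  "omega_splitting As \<longleftrightarrow> (\<forall>A\<in>As. infinite A) \<and>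
     (\<forall>B :: nat \<Rightarrow> nat set. (\<forall>n. infinite (B n)) \<longrightarrow> (\<exists>A\<in>As. \<forall>n. splits A (B n)))"

definition s_omega :: "nat set rel" where
  "s_omega = card_of (SOME As. omega_splitting As \<and>
       (\<forall>Bs. omega_splitting Bs \<longrightarrow> (card_of As, card_of Bs) \<in> ordLeq))"

end

theory Submission
  imports Defs
begin


fun blk :: "(nat \<Rightarrow> nat) \<Rightarrow> nat \<Rightarrow> nat" where
  "blk G 0 = 0"
| "blk G (Suc j) = max (Suc (blk G j)) (G (blk G j))"

lemma blk_smono: "strict_mono (blk G)"
  unfolding strict_mono_Suc_iff by (simp add: less_max_iff_disj)

lemma blk_ge: "j \<le> blk G j"
  using blk_smono strict_mono_imp_increasing by blast

lemma blk_Suc_ge: "G (blk G j) \<le> blk G (Suc j)"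
  by simp

lemma blk_cover: "\<exists>j. blk G j \<le> p \<and> p < blk G (Suc j)"
proof -
  let ?j = "GREATEST j. blk G j \<le> p"
  have ex: "blk G 0 \<le> p" by simp
  have bd: "\<forall>j. blk G j \<le> p \<longrightarrow> j \<le> p" using blk_ge le_trans by blast
  have 1: "blk G ?j \<le> p" by (rule GreatestI_nat[of "\<lambda>j. blk G j \<le> p" 0 p]) (use bd in auto)
  have 2: "\<not> blk G (Suc ?j) \<le> p"
  proof
    assume "blk G (Suc ?j) \<le> p"
    then have "Suc ?j \<le> ?j" by (rule Greatest_le_nat[of "\<lambda>j. blk G j \<le> p" _ p]) (use bd in auto)
    then show False by simp
  qed
  show ?thesis using 1 2 by (intro exI[of _ ?j]) auto
qed

lemma blk_unique:
  assumes "blk G j \<le> p" "p < blk G (Suc j)" "blk G j' \<le> p" "p < blk G (Suc j')"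
  shows "j = j'"
proof (rule ccontr)
  assume "j \<noteq> j'"
  then consider "j < j'" | "j' < j" by linarith
  then show False
  proof cases
    case 1
    then have "Suc j \<le> j'" by simp
    then have "blk G (Suc j) \<le> blk G j'" using blk_smono strict_mono_less_eq by blast
    then show False using assms by linarith
  next
    case 2
    then have "Suc j' \<le> j" by simp
    then have "blk G (Suc j') \<le> blk G j" using blk_smono strict_mono_less_eq by blast
    then show False using assms by linarith
  qed
qed

definition Aset :: "(nat \<Rightarrow> nat) \<Rightarrow> nat set" where
  "Aset G = {p. \<exists>j. even j \<and> blk G j \<le> p \<and> p < blk G (Suc j)}"

lemma Aset_splits:
  assumes "\<forall>k\<ge>K. \<exists>b\<in>B. k \<le> b \<and> b < G k"
  shows "splits (Aset G) B"
proof -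
  have pt: "\<exists>b\<in>B. blk G j \<le> b \<and> b < blk G (Suc j)" if "j \<ge> K" for j
  proof -
    have "blk G j \<ge> K" using that blk_ge le_trans by blast
    then obtain b where "b \<in> B" "blk G j \<le> b" "b < G (blk G j)" using assms by blast
    then show ?thesis using blk_Suc_ge[of G j] by (intro bexI[of _ b]) auto
  qed
  have "infinite (B \<inter> Aset G)"
    unfolding infinite_nat_iff_unbounded_le
  proof
    fix m
    let ?j = "2 * (m + K)"
    obtain b where b: "b \<in> B" "blk G ?j \<le> b" "b < blk G (Suc ?j)" using pt[of ?j] by auto
    have "m \<le> ?j" by simp
    then have "m \<le> b" using b(2) blk_ge[of ?j G] by linarith
    moreover have "b \<in> Aset G" unfolding Aset_def using b by (intro CollectI exI[of _ ?j]) auto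
    ultimately show "\<exists>n\<ge>m. n \<in> B \<inter> Aset G" using b by blast
  qed
  moreover have "infinite (B - Aset G)"
    unfolding infinite_nat_iff_unbounded_le
  proof
    fix m
    let ?j = "Suc (2 * (m + K))"
    obtain b where b: "b \<in> B" "blk G ?j \<le> b" "b < blk G (Suc ?j)" using pt[of ?j] by auto
    have "m \<le> ?j" by simp
    then have "m \<le> b" using b(2) blk_ge[of ?j G] by linarith
    moreover have "b \<notin> Aset G"
    proof
      assume "b \<in> Aset G"
      then obtain j' where j': "even j'" "blk G j' \<le> b" "b < blk G (Suc j')" unfolding Aset_def by blast
      have "j' = ?j" by (rule blk_unique[OF j'(2,3) b(2,3)])
      then show False using \<open>even j'\<close> by simp
    qed
    ultimately show "\<exists>n\<ge>m. n \<in> B - Aset G" using b by blast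
  qed
  ultimately show ?thesis unfolding splits_def by blast
qed

definition hf :: "(nat \<Rightarrow> nat set) \<Rightarrow> nat \<Rightarrow> nat" where
  "hf B k = Suc (\<Sum>n\<le>k. LEAST b. b \<in> B n \<and> k \<le> b)"

lemma least_ge:
  assumes "infinite (S::nat set)"
  shows "(LEAST b. b \<in> S \<and> k \<le> b) \<in> S \<and> k \<le> (LEAST b. b \<in> S \<and> k \<le> b)"
proof -
  obtain b where "b \<ge> k" "b \<in> S" using assms unfolding infinite_nat_iff_unbounded_le by blast
  then show ?thesis using LeastI[of "\<lambda>b. b \<in> S \<and> k \<le> b" b] by blast
qed

lemma least_mono:
  assumes "infinite (S::nat set)" "k \<le> k'"
  shows "(LEAST b. b \<in> S \<and> k \<le> b) \<le> (LEAST b. b \<in> S \<and> k' \<le> b)"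
proof -
  have "(LEAST b. b \<in> S \<and> k' \<le> b) \<in> S \<and> k \<le> (LEAST b. b \<in> S \<and> k' \<le> b)"
    using least_ge[OF assms(1), of k'] assms(2) by linarith
  then show ?thesis by (rule Least_le)
qed

lemma hf_prop:
  assumes "infinite (B n)" "n \<le> k"
  shows "\<exists>b\<in>B n. k \<le> b \<and> b < hf B k"
proof -
  let ?b = "LEAST b. b \<in> B n \<and> k \<le> b"
  have "?b \<le> (\<Sum>n\<le>k. LEAST b. b \<in> B n \<and> k \<le> b)"
    by (rule member_le_sum[of n "{..k}" "\<lambda>n. LEAST b. b \<in> B n \<and> k \<le> b"]) (use assms(2) in auto)
  then show ?thesis using least_ge[OF assms(1), of k] unfolding hf_def
    by (intro bexI[of _ ?b]) auto
qed

lemma hf_mono: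
  assumes "\<forall>n. infinite (B n)" "k \<le> k'"
  shows "hf B k \<le> hf B k'"
proof -
  have "(\<Sum>n\<le>k. LEAST b. b \<in> B n \<and> k \<le> b) \<le> (\<Sum>n\<le>k. LEAST b. b \<in> B n \<and> k' \<le> b)"
  proof (rule sum_mono)
    fix n assume "n \<in> {..k}"
    show "(LEAST b. b \<in> B n \<and> k \<le> b) \<le> (LEAST b. b \<in> B n \<and> k' \<le> b)"
      by (rule least_mono[OF _ assms(2)]) (use assms(1) in blast)
  qed
  also have "\<dots> \<le> (\<Sum>n\<le>k'. LEAST b. b \<in> B n \<and> k' \<le> b)"
    by (rule sum_mono2) (use assms(2) in auto)
  finally show ?thesis unfolding hf_def by simp
qed

lemma Aset_hf_splits:
  assumes "\<forall>n. infinite (B n)"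
  shows "splits (Aset (hf B)) (B n)"
  proof (rule Aset_splits[of n], intro allI impI)
  fix k assume "n \<le> k"
  show "\<exists>b\<in>B n. k \<le> b \<and> b < hf B k" by (rule hf_prop) (use assms \<open>n \<le> k\<close> in auto)
qed

lemma splits_infinite: "splits A B \<Longrightarrow> infinite A"
  unfolding splits_def by auto

lemma omega_splitting_exists: "omega_splitting {A. infinite A}"
proof -
  have "\<exists>A\<in>{A. infinite A}. \<forall>n. splits A (B n)" if "\<forall>n. infinite (B n)" for B :: "nat \<Rightarrow> nat set"
  proof -
    have s: "\<forall>n. splits (Aset (hf B)) (B n)" by (intro allI Aset_hf_splits that)
    have "infinite (Aset (hf B))" by (rule splits_infinite[OF s[rule_format, of 0]])
    then show ?thesis using s by blast
  qed
  then show ?thesis unfolding omega_splitting_def by blast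
qed



definition ext :: "bool list set \<Rightarrow> bool list \<Rightarrow> bool list set" where
  "ext F \<tau> = {\<sigma>\<in>F. take (length \<tau>) \<sigma> = \<tau>}"

fun tau :: "bool list set \<Rightarrow> nat \<Rightarrow> bool list" where
  "tau F 0 = []"
| "tau F (Suc k) = (if infinite (ext F (tau F k @ [True])) then tau F k @ [True] else tau F k @ [False])"

lemma ext_split: "ext F \<tau> \<subseteq> {\<tau>} \<union> ext F (\<tau> @ [True]) \<union> ext F (\<tau> @ [False])"
proof
  fix \<sigma> assume s: "\<sigma> \<in> ext F \<tau>"
  then have sF: "\<sigma> \<in> F" and t: "take (length \<tau>) \<sigma> = \<tau>" unfolding ext_def by auto
  show "\<sigma> \<in> {\<tau>} \<union> ext F (\<tau> @ [True]) \<union> ext F (\<tau> @ [False])"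
  proof (cases "length \<sigma> \<le> length \<tau>")
    case True
    then have "\<sigma> = \<tau>" using t by simp
    then show ?thesis by simp
  next
    case False
    then have "take (Suc (length \<tau>)) \<sigma> = \<tau> @ [\<sigma> ! length \<tau>]"
      using t take_Suc_conv_app_nth[of "length \<tau>" \<sigma>] by simp
    then show ?thesis using sF unfolding ext_def by (cases "\<sigma> ! length \<tau>") auto
  qed
qed

lemma tau_inf: "infinite F \<Longrightarrow> infinite (ext F (tau F k))"
proof (induction k)
  case 0
  have "ext F [] = F" unfolding ext_def by auto
  then show ?case using 0 by simp
next
  case (Suc k)
  show ?case
  proof (cases "infinite (ext F (tau F k @ [True]))")
    case True
    then show ?thesis by simp
  next
    case False
    have "infinite (ext F (tau F k @ [False]))"
    proof
      assume "finite (ext F (tau F k @ [False]))"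
      then have "finite ({tau F k} \<union> ext F (tau F k @ [True]) \<union> ext F (tau F k @ [False]))"
        using False by simp
      then have "finite (ext F (tau F k))" using finite_subset[OF ext_split] by blast
      then show False using Suc by simp
    qed
    then show ?thesis using False by simp
  qed
qed

lemma length_tau: "length (tau F k) = k"
  by (induction k) auto

lemma take_tau: "k \<le> K \<Longrightarrow> take k (tau F K) = tau F k"
proof (induction K)
  case 0
  then show ?case by simp
next
  case (Suc K)
  show ?case
  proof (cases "k = Suc K")
    case True
    then show ?thesis using length_tau[of F "Suc K"] by simp
  next
    case False
    then have "k \<le> K" using Suc by simp
    have "take k (tau F (Suc K)) = take k (tau F K)"
      using \<open>k \<le> K\<close> length_tau[of F K] by auto
    then show ?thesis using Suc.IH[OF \<open>k \<le> K\<close>] by simp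
  qed
qed

definition xF :: "bool list set \<Rightarrow> nat set" where
  "xF F = {p. tau F (Suc p) ! p}"

lemma tau_nth: "p < k \<Longrightarrow> tau F k ! p = (p \<in> xF F)"
proof -
  assume "p < k"
  then have "tau F k ! p = take (Suc p) (tau F k) ! p" by simp
  also have "\<dots> = tau F (Suc p) ! p" using take_tau[of "Suc p" k F] \<open>p < k\<close> by simp
  finally show ?thesis unfolding xF_def by simp
qed

definition sig :: "bool list set \<Rightarrow> nat \<Rightarrow> bool list" where
  "sig F k = (SOME \<sigma>. \<sigma> \<in> ext F (tau F k))"

lemma sig_props:
  assumes "infinite F"
  shows "sig F k \<in> F" "k \<le> length (sig F k)" "\<And>p. p < k \<Longrightarrow> sig F k ! p = (p \<in> xF F)"
proof -
  have "ext F (tau F k) \<noteq> {}" using tau_inf[OF assms, of k] by auto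
  then have s: "sig F k \<in> ext F (tau F k)" unfolding sig_def by (meson ex_in_conv someI)
  then have t: "take k (sig F k) = tau F k" and "sig F k \<in> F" unfolding ext_def length_tau by auto
  then show "sig F k \<in> F" by simp
  have "length (take k (sig F k)) = k" using t length_tau by simp
  then show "k \<le> length (sig F k)" by simp
  fix p assume "p < k"
  then have "sig F k ! p = take k (sig F k) ! p" by simp
  then show "sig F k ! p = (p \<in> xF F)" using t tau_nth[OF \<open>p < k\<close>] by simp
qed

definition ell :: "bool list set \<Rightarrow> nat \<Rightarrow> nat" where
  "ell F k = length (sig F k)"

definition GF :: "bool list set \<Rightarrow> nat \<Rightarrow> nat" where
  "GF F k = ell F (ell F k)"

definition AF :: "bool list set \<Rightarrow> nat set" where
  "AF F = Aset (GF F)"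

lemma finite_homog:
  assumes "finite \<A>" "infinite (B::nat set)"
  shows "\<exists>B'\<subseteq>B. infinite B' \<and> (\<forall>A\<in>\<A>. B' \<subseteq> A \<or> B' \<inter> A = {})"
  using assms(1)
proof (induction \<A> rule: finite_induct)
  case empty
  then show ?case using assms(2) by blast
next
  case (insert A \<A>)
  then obtain B' where B': "B' \<subseteq> B" "infinite B'" "\<forall>A\<in>\<A>. B' \<subseteq> A \<or> B' \<inter> A = {}" by blast
  show ?case
  proof (cases "infinite (B' \<inter> A)")
    case True
    have "\<forall>A'\<in>insert A \<A>. B' \<inter> A \<subseteq> A' \<or> B' \<inter> A \<inter> A' = {}" using B'(3) by blast
    moreover have "B' \<inter> A \<subseteq> B" using B'(1) by blast
    ultimately show ?thesis using True by blast
  next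
    case False
    have "B' = (B' \<inter> A) \<union> (B' - A)" by blast
    have "infinite (B' - A)"
    proof
      assume "finite (B' - A)"
      then have "finite ((B' \<inter> A) \<union> (B' - A))" using False by simp
      then show False using B'(2) \<open>B' = (B' \<inter> A) \<union> (B' - A)\<close> by simp
    qed
    have "\<forall>A'\<in>insert A \<A>. B' - A \<subseteq> A' \<or> (B' - A) \<inter> A' = {}" using B'(3) by blast
    moreover have "B' - A \<subseteq> B" using B'(1) by blast
    ultimately show ?thesis using \<open>infinite (B' - A)\<close> by blast
  qed
qed

lemma finite_not_omega: "finite \<A> \<Longrightarrow> \<not> omega_splitting \<A>"
proof
  assume f: "finite \<A>" and o: "omega_splitting \<A>"
  obtain B' :: "nat set" where B': "infinite B'" "\<forall>A\<in>\<A>. B' \<subseteq> A \<or> B' \<inter> A = {}"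
    using finite_homog[OF f, of UNIV] by auto
  have "\<exists>A\<in>\<A>. \<forall>n::nat. splits A ((\<lambda>n::nat. B') n)"
    using o[unfolded omega_splitting_def, THEN conjunct2, rule_format, of "\<lambda>n. B'"] B'(1) by simp
  then obtain A where "A \<in> \<A>" "splits A B'" by auto
  then have i1: "infinite (B' \<inter> A)" and i2: "infinite (B' - A)" unfolding splits_def by auto
  from B'(2) \<open>A \<in> \<A>\<close> have "B' \<subseteq> A \<or> B' \<inter> A = {}" by blast
  then show False
  proof
    assume "B' \<subseteq> A"
    then have e: "B' - A = {}" by blast
    show False using i2 unfolding e by simp
  next
    assume "B' \<inter> A = {}"
    then show False using i1 by simp
  qed
qed

definition chi :: "nat set \<Rightarrow> nat \<Rightarrow> bool list" where
  "chi A n = map (\<lambda>i. i \<in> A) [0..<n]"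

definition Phi :: "nat set \<Rightarrow> bool list set" where
  "Phi A = range (chi A)"

lemma Phi_S_finite:
  assumes "splits A C"
  shows "finite (Phi A \<inter> S_set C)"
proof -
  have "C \<inter> A \<noteq> {}"
  proof
    assume "C \<inter> A = {}" then show False using assms unfolding splits_def by simp
  qed
  have "C - A \<noteq> {}"
  proof
    assume e: "C - A = {}" have "finite (C - A)" unfolding e by simp
    then show False using assms unfolding splits_def by blast
  qed
  then obtain a b where a: "a \<in> C" "a \<in> A" and b: "b \<in> C" "b \<notin> A" using \<open>C \<inter> A \<noteq> {}\<close> by blast
  have "Phi A \<inter> S_set C \<subseteq> chi A ` {..max a b}"
  proof
    fix \<sigma> assume s: "\<sigma> \<in> Phi A \<inter> S_set C"
    then obtain n where n: "\<sigma> = chi A n" unfolding Phi_def by auto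
    have "n \<le> max a b"
    proof (rule ccontr)
      assume "\<not> n \<le> max a b"
      then have lt: "a < n" "b < n" by auto
      have l: "length \<sigma> = n" unfolding n chi_def by simp
      have "\<sigma> ! a = (a \<in> A)" "\<sigma> ! b = (b \<in> A)" unfolding n chi_def using lt by simp_all
      then have ne: "\<sigma> ! a \<noteq> \<sigma> ! b" using a b by simp
      have "\<sigma> \<in> S_set C" using s by blast
      then have "\<sigma> ! a = \<sigma> ! b" unfolding S_set_def using a(1) b(1) lt l by blast
      then show False using ne by simp
    qed
    then show "\<sigma> \<in> chi A ` {..max a b}" using n by auto
  qed
  then show ?thesis using finite_subset by blast
qed

lemma Phi_witness:
  assumes "omega_splitting \<A>"
  shows "non_star_omega_family Spl (Phi ` \<A>)"
  unfolding non_star_omega_family_def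
proof (intro conjI ballI allI impI)
  fix F assume "F \<in> Phi ` \<A>"
  then obtain A where F: "F = Phi A" by auto
  have "inj (chi A)"
  proof (rule injI)
    fix m n assume "chi A m = chi A n"
    then have "length (chi A m) = length (chi A n)" by simp
    then show "m = n" unfolding chi_def by simp
  qed
  then show "infinite F" unfolding F Phi_def using range_inj_infinite by blast
  show "countable F" unfolding F Phi_def by simp
next
  fix Bs :: "bool list set set" assume Bs: "countable Bs \<and> Bs \<subseteq> Spl"
  define As where "As B = (SOME As. finite As \<and> (\<forall>A\<in>As. infinite A) \<and> B \<subseteq> (\<Union>A\<in>As. S_set A))" for B
  have As: "finite (As B) \<and> (\<forall>A\<in>As B. infinite A) \<and> B \<subseteq> (\<Union>A\<in>As B. S_set A)" if "B \<in> Bs" for B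
  proof -
    have "\<exists>As. finite As \<and> (\<forall>A\<in>As. infinite A) \<and> B \<subseteq> (\<Union>A\<in>As. S_set A)"
      using that Bs unfolding Spl_def by blast
    then show ?thesis unfolding As_def by (rule someI_ex)
  qed
  define G where "G = insert UNIV (\<Union>B\<in>Bs. As B)"
  have cG: "countable G" unfolding G_def using Bs As by (intro countable_insert countable_UN) (auto intro: countable_finite)
  have nG: "G \<noteq> {}" unfolding G_def by simp
  define Cs where "Cs n = from_nat_into G n" for n
  have rG: "range Cs = G" unfolding Cs_def using range_from_nat_into[OF nG cG] .
  have "\<forall>n. infinite (Cs n)"
  proof
    fix n
    have "Cs n \<in> G" using rG by auto
    then show "infinite (Cs n)" unfolding G_def using As by auto
  qed
  then obtain A where A: "A \<in> \<A>" "\<forall>n. splits A (Cs n)" using assms unfolding omega_splitting_def by blast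
  have spl: "splits A C" if CG: "C \<in> G" for C
  proof -
    obtain n where "C = Cs n" using rG CG by blast
    then show ?thesis using A(2) by simp
  qed
  show "\<exists>F\<in>Phi ` \<A>. \<forall>B\<in>Bs. finite (B \<inter> F)"
  proof (intro bexI[of _ "Phi A"] ballI)
    fix B assume "B \<in> Bs"
    have "B \<inter> Phi A \<subseteq> (\<Union>C\<in>As B. Phi A \<inter> S_set C)" using As[OF \<open>B \<in> Bs\<close>] by blast
    moreover have "finite (\<Union>C\<in>As B. Phi A \<inter> S_set C)"
    proof (rule finite_UN_I)
      show "finite (As B)" using As[OF \<open>B \<in> Bs\<close>] by blast
      fix C assume "C \<in> As B"
      then have "C \<in> G" unfolding G_def using \<open>B \<in> Bs\<close> by blast
      then show "finite (Phi A \<inter> S_set C)" using Phi_S_finite spl by blast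
    qed
    ultimately show "finite (B \<inter> Phi A)" using finite_subset by blast
  qed (use A in auto)
qed



lemma core:
  assumes W: "non_star_omega_family Spl \<F>"
    and Binf: "\<forall>n. infinite ((B::nat \<Rightarrow> nat set) n)"
    and hx: "\<forall>F\<in>\<F>. \<exists>n. \<not> splits (xF F) (B n)"
    and hA: "\<forall>F\<in>\<F>. \<exists>n. \<not> splits (AF F) (B n)"
  shows False
proof -
  define h where "h = hf B"
  have hmono: "h k \<le> h k'" if "k \<le> k'" for k k'
    unfolding h_def using hf_mono[OF Binf that] .
  have hprop: "\<exists>b\<in>B n. k \<le> b \<and> b < h k" if "n \<le> k" for n k
    unfolding h_def using hf_prop[OF Binf[rule_format] that] .
  have notdom: "\<exists>k\<ge>K. GF F k < h k" if FF: "F \<in> \<F>" for F K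
  proof (rule ccontr)
    assume "\<not> (\<exists>k\<ge>K. GF F k < h k)"
    then have dom: "\<forall>k\<ge>K. h k \<le> GF F k" by auto
    have "splits (AF F) (B n)" for n
      unfolding AF_def
    proof (rule Aset_splits[of "max K n"], intro allI impI)
      fix k assume "max K n \<le> k"
      then obtain b where "b \<in> B n" "k \<le> b" "b < h k" using hprop[of n k] by auto
      moreover have "h k \<le> GF F k" using dom \<open>max K n \<le> k\<close> by auto
      ultimately show "\<exists>b\<in>B n. k \<le> b \<and> b < GF F k" by auto
    qed
    then show False using hA FF by metis
  qed
  define D where "D n r m = {p \<in> B n. m \<le> p \<and> (\<exists>j. even j = r \<and> blk h j \<le> p \<and> p < blk h (Suc j))}"
    for n r m
  have Dinf: "infinite (D n r m)" for n r m
    unfolding infinite_nat_iff_unbounded_le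
  proof
    fix M
    define j where "j = 2 * (n + m + M) + (if r then 0 else 1)"
    have ej: "even j = r" unfolding j_def by simp
    have "n + m + M \<le> j" unfolding j_def by simp
    then have jge: "n + m + M \<le> blk h j" using blk_ge[of j h] by linarith
    then obtain b where b: "b \<in> B n" "blk h j \<le> b" "b < h (blk h j)" using hprop[of n "blk h j"] by auto
    have "h (blk h j) \<le> blk h (Suc j)" by (rule blk_Suc_ge)
    then have "b < blk h (Suc j)" using b(3) by linarith
    moreover have "m \<le> b" using jge b(2) by linarith
    ultimately have "b \<in> D n r m" unfolding D_def using b(1,2) ej by blast
    moreover have "M \<le> b" using jge b by linarith
    ultimately show "\<exists>b\<ge>M. b \<in> D n r m" by blast
  qed
  define Bs where "Bs = range (\<lambda>(n, r, m). S_set (D n r m))"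
  have cBs: "countable Bs" unfolding Bs_def by simp
  have sBs: "Bs \<subseteq> Spl"
  proof
    fix X assume "X \<in> Bs"
    then obtain n r m where X: "X = S_set (D n r m)" unfolding Bs_def by auto
    have "finite {D n r m} \<and> (\<forall>A\<in>{D n r m}. infinite A) \<and> S_set (D n r m) \<subseteq> (\<Union>A\<in>{D n r m}. S_set A)"
      using Dinf[of n r m] by simp
    then show "X \<in> Spl" unfolding Spl_def X by blast
  qed
  obtain F where FF: "F \<in> \<F>" and Ffin: "\<forall>X\<in>Bs. finite (X \<inter> F)"
    using W cBs sBs unfolding non_star_omega_family_def by blast
  have Finf: "infinite F" using W FF unfolding non_star_omega_family_def by blast
  obtain n where ns: "\<not> splits (xF F) (B n)" using hx FF by blast
  obtain m c where mc: "\<forall>p\<in>B n. m \<le> p \<longrightarrow> (p \<in> xF F) = c"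
  proof (cases "finite (B n \<inter> xF F)")
    case True
    then obtain m where "B n \<inter> xF F \<subseteq> {..<m}" using finite_nat_bounded by blast
    then have "\<forall>p\<in>B n. m \<le> p \<longrightarrow> (p \<in> xF F) = False" by auto
    then show ?thesis using that by blast
  next
    case False
    then have "finite (B n - xF F)" using ns unfolding splits_def by blast
    then obtain m where "B n - xF F \<subseteq> {..<m}" using finite_nat_bounded by blast
    then have "\<forall>p\<in>B n. m \<le> p \<longrightarrow> (p \<in> xF F) = True" by auto
    then show ?thesis using that by blast
  qed
  have key: "\<exists>i\<ge>K. \<exists>j. blk h j \<le> i \<and> ell F i \<le> blk h (Suc j)" for K
  proof -
    obtain k where k: "k \<ge> K" "GF F k < h k" using notdom[OF FF] by blast
    obtain j where j: "blk h j \<le> k" "k < blk h (Suc j)" using blk_cover by blast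
    show ?thesis
    proof (cases "ell F k \<le> blk h (Suc j)")
      case True
      then show ?thesis using k j by blast
    next
      case False
      have "k \<le> ell F k" unfolding ell_def using sig_props(2)[OF Finf] .
      moreover have "ell F (ell F k) \<le> blk h (Suc (Suc j))"
      proof -
        have "ell F (ell F k) < h k" using k(2) unfolding GF_def .
        also have "h k \<le> h (blk h (Suc j))" using j(2) hmono by simp
        also have "h (blk h (Suc j)) \<le> blk h (Suc (Suc j))" by (rule blk_Suc_ge)
        finally show ?thesis by simp
      qed
      moreover have "blk h (Suc j) \<le> ell F k" using False by (metis nat_le_linear)
      ultimately have "\<exists>j'. blk h j' \<le> ell F k \<and> ell F (ell F k) \<le> blk h (Suc j')" by blast
      then show ?thesis using k(1) \<open>k \<le> ell F k\<close> le_trans by blast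
    qed
  qed
  have "(\<forall>K. \<exists>i\<ge>K. \<exists>j. even j = True \<and> blk h j \<le> i \<and> ell F i \<le> blk h (Suc j)) \<or>
        (\<forall>K. \<exists>i\<ge>K. \<exists>j. even j = False \<and> blk h j \<le> i \<and> ell F i \<le> blk h (Suc j))"
  proof (rule ccontr)
    assume "\<not> ?thesis"
    then obtain K1 K2 where
      K1: "\<not> (\<exists>i\<ge>K1. \<exists>j. even j = True \<and> blk h j \<le> i \<and> ell F i \<le> blk h (Suc j))" and
      K2: "\<not> (\<exists>i\<ge>K2. \<exists>j. even j = False \<and> blk h j \<le> i \<and> ell F i \<le> blk h (Suc j))"
      by blast
    obtain i j where ij: "i \<ge> max K1 K2" "blk h j \<le> i" "ell F i \<le> blk h (Suc j)" using key by blast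
    show False
    proof (cases "even j")
      case True
      then show False using K1 ij by auto
    next
      case False
      then show False using K2 ij by auto
    qed
  qed
  then have "\<exists>r. \<forall>K. \<exists>i\<ge>K. \<exists>j. even j = r \<and> blk h j \<le> i \<and> ell F i \<le> blk h (Suc j)"
    by blast
  then obtain r where r: "\<forall>K. \<exists>i\<ge>K. \<exists>j. even j = r \<and> blk h j \<le> i \<and> ell F i \<le> blk h (Suc j)" by blast
  define C where "C = D n (\<not> r) m"
  define I where "I = {i. m \<le> i \<and> (\<exists>j. even j = r \<and> blk h j \<le> i \<and> ell F i \<le> blk h (Suc j))}"
  have sub: "sig F ` I \<subseteq> S_set C \<inter> F"
  proof
    fix \<sigma> assume "\<sigma> \<in> sig F ` I"
    then obtain i where i: "i \<in> I" "\<sigma> = sig F i" by blast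
    then obtain j where j: "m \<le> i" "even j = r" "blk h j \<le> i" "ell F i \<le> blk h (Suc j)"
      unfolding I_def by blast
    have val: "\<sigma> ! p = c" if p: "p \<in> C" "p < length \<sigma>" for p
    proof -
      obtain j' where j': "even j' = (\<not> r)" "blk h j' \<le> p" "p < blk h (Suc j')" "p \<in> B n" "m \<le> p"
        using p(1) unfolding C_def D_def by blast
      have "p < i"
      proof (rule ccontr)
        assume "\<not> p < i"
        then have "blk h j \<le> p" "p < blk h (Suc j)" using j p(2) i(2) unfolding ell_def by auto
        then have "j = j'" using blk_unique j'(2,3) by blast
        then show False using j(2) j'(1) by simp
      qed
      then have "\<sigma> ! p = (p \<in> xF F)" using sig_props(3)[OF Finf] i(2) by blast
      then show ?thesis using mc j'(4,5) by blast
    qed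
    have "\<sigma> \<in> S_set C" unfolding S_set_def
    proof (intro CollectI ballI impI)
      fix p q assume "p \<in> C" "q \<in> C" "p < length \<sigma>" "q < length \<sigma>"
      then show "\<sigma> ! p = \<sigma> ! q" using val[of p] val[of q] by simp
    qed
    moreover have "\<sigma> \<in> F" using sig_props(1)[OF Finf] i(2) by simp
    ultimately show "\<sigma> \<in> S_set C \<inter> F" by blast
  qed
  have "S_set C = (\<lambda>(n, r, m). S_set (D n r m)) (n, \<not> r, m)" unfolding C_def by simp
  then have "S_set C \<in> Bs" unfolding Bs_def by (metis rangeI)
  then have "finite (S_set C \<inter> F)" using Ffin by blast
  then have fin: "finite (sig F ` I)" using sub finite_subset by blast
  then have "finite (length ` sig F ` I)" by simp
  then obtain M where M: "length ` sig F ` I \<subseteq> {..<M}" using finite_nat_bounded by blast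
  obtain i j where ij: "i \<ge> max m M" "even j = r" "blk h j \<le> i" "ell F i \<le> blk h (Suc j)"
    using r by blast
  then have "i \<in> I" unfolding I_def by auto
  then have "length (sig F i) < M" using M by auto
  moreover have "i \<le> length (sig F i)" using sig_props(2)[OF Finf] .
  ultimately show False using ij(1) by simp
qed



lemma min_exists:
  fixes P :: "'a set \<Rightarrow> bool"
  assumes "\<exists>X. P X"
  shows "\<exists>X. P X \<and> (\<forall>Y. P Y \<longrightarrow> (card_of X, card_of Y) \<in> ordLeq)"
proof -
  define R where "R = {card_of X | X. P X}"
  obtain X0 where "P X0" using assms by blast
  then have "card_of X0 \<in> R" unfolding R_def by blast
  then obtain r where r: "r \<in> R" "\<And>r'. (r', r) \<in> ordLess \<Longrightarrow> r' \<notin> R"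
    using wfE_min[OF wf_ordLess] by metis
  then obtain X where X: "P X" "r = card_of X" unfolding R_def by blast
  have "(card_of X, card_of Y) \<in> ordLeq" if "P Y" for Y
  proof -
    have "card_of Y \<in> R" unfolding R_def using that by blast
    then have "(card_of Y, card_of X) \<notin> ordLess" using r(2) X(2) by blast
    then show ?thesis using not_ordLess_iff_ordLeq[OF card_of_Well_order card_of_Well_order] by blast
  qed
  then show ?thesis using X(1) by blast
qed

theorem mainTheorem15:
  shows "(non_star_omega Spl, s_omega) \<in> ordIso"
proof -
  define Mn where "Mn = (SOME Fs. non_star_omega_family Spl Fs \<and>
       (\<forall>Gs. non_star_omega_family Spl Gs \<longrightarrow> (card_of Fs, card_of Gs) \<in> ordLeq))"
  define Ms where "Ms = (SOME As. omega_splitting As \<and>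
       (\<forall>Bs. omega_splitting Bs \<longrightarrow> (card_of As, card_of Bs) \<in> ordLeq))"
  have ex_s: "\<exists>As. omega_splitting As" using omega_splitting_exists by blast
  have Ms: "omega_splitting Ms \<and> (\<forall>Bs. omega_splitting Bs \<longrightarrow> (card_of Ms, card_of Bs) \<in> ordLeq)"
    unfolding Ms_def by (rule someI_ex[OF min_exists[OF ex_s]])
  have ex_n: "\<exists>Fs. non_star_omega_family Spl Fs" using Phi_witness[OF omega_splitting_exists] by blast
  have Mn: "non_star_omega_family Spl Mn \<and> (\<forall>Gs. non_star_omega_family Spl Gs \<longrightarrow> (card_of Mn, card_of Gs) \<in> ordLeq)"
    unfolding Mn_def by (rule someI_ex[OF min_exists[OF ex_n]])
  have d1: "(card_of Mn, card_of Ms) \<in> ordLeq"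
  proof -
    have "(card_of Mn, card_of (Phi ` Ms)) \<in> ordLeq" using Mn Phi_witness Ms by blast
    moreover have "(card_of (Phi ` Ms), card_of Ms) \<in> ordLeq" by (rule card_of_image)
    ultimately show ?thesis using ordLeq_transitive by blast
  qed
  have d2: "(card_of Ms, card_of Mn) \<in> ordLeq"
  proof (rule ccontr)
    assume "(card_of Ms, card_of Mn) \<notin> ordLeq"
    then have less: "(card_of Mn, card_of Ms) \<in> ordLess"
      using not_ordLeq_iff_ordLess[OF card_of_Well_order card_of_Well_order] by blast
    have infMs: "infinite Ms" using Ms finite_not_omega by blast
    define U where "U = xF ` Mn \<union> AF ` Mn"
    define \<A> where "\<A> = {A \<in> U. infinite A}"
    have "(card_of (xF ` Mn), card_of Ms) \<in> ordLess"
      using card_of_image ordLeq_ordLess_trans less by blast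
    moreover have "(card_of (AF ` Mn), card_of Ms) \<in> ordLess"
      using card_of_image ordLeq_ordLess_trans less by blast
    ultimately have "(card_of U, card_of Ms) \<in> ordLess"
      unfolding U_def using card_of_Un_ordLess_infinite infMs by blast
    moreover have "(card_of \<A>, card_of U) \<in> ordLeq" unfolding \<A>_def by (rule card_of_mono1) blast
    ultimately have lA: "(card_of \<A>, card_of Ms) \<in> ordLess" using ordLeq_ordLess_trans by blast
    have "\<not> omega_splitting \<A>"
    proof
      assume "omega_splitting \<A>"
      then have "(card_of Ms, card_of \<A>) \<in> ordLeq" using Ms by blast
      then show False using lA not_ordLess_ordLeq by blast
    qed
    moreover have "\<forall>A\<in>\<A>. infinite A" unfolding \<A>_def by blast
    ultimately obtain B :: "nat \<Rightarrow> nat set" where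
      B: "\<forall>n. infinite (B n)" "\<not> (\<exists>A\<in>\<A>. \<forall>n. splits A (B n))"
      unfolding omega_splitting_def by blast
    have nsp: "\<exists>n. \<not> splits A (B n)" if "A \<in> U" for A
    proof (cases "infinite A")
      case True
      then have "A \<in> \<A>" unfolding \<A>_def using that by blast
      then show ?thesis using B(2) by blast
    next
      case False
      then show ?thesis using splits_infinite by blast
    qed
    show False
    proof (rule core[of Mn B])
      show "non_star_omega_family Spl Mn" using Mn by blast
      show "\<forall>n. infinite (B n)" using B(1) .
      show "\<forall>F\<in>Mn. \<exists>n. \<not> splits (xF F) (B n)" using nsp unfolding U_def by blast
      show "\<forall>F\<in>Mn. \<exists>n. \<not> splits (AF F) (B n)" using nsp unfolding U_def by blast
    qed
  qed
  have "(card_of Mn, card_of Ms) \<in> ordIso" using d1 d2 ordIso_iff_ordLeq by blast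
  then show ?thesis unfolding non_star_omega_def s_omega_def Mn_def[symmetric] Ms_def[symmetric] .
qed

end
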